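(* Let $M(C,\bar\xi,\pi)$ be a Myller configuration with Darboux frame $(\bar\xi,\bar\mu,\bar v)$ and invariants $G,K,T$, $(G,T)\neq(0,0)$ everywhere, and suppose $C$ is a $\bar\mu$-helix with fixed unit axis $\bar d_\mu$ and constant angle $\eta$, $\langle\bar\mu,\bar d_\mu\rangle=\cos\eta$. Then, for one choice of sign, $$\bar d_\mu=\mp\sin\eta\frac{T}{\sqrt{G^2+T^2}}\bar\xi+(\cos\eta)\bar\mu\mp\sin\eta\frac{G}{\sqrt{G^2+T^2}}\bar v.$$
   Context: Let $C$ be a smooth curve in $E^3$ parametrized by arclength $s$; primes denote $d/ds$. A Myller configuration $M(C,\bar\xi,\pi)$ consists of a smooth unit vector field $\bar\xi$ along $C$ and a smooth oriented plane field $\pi$ with $\bar\xi\in\pi$; $\bar v$ is the unit normal of $\pi$, $\bar\mu=\bar v\times\bar\xi$, and $\bar\xi'=G\bar\mu+K\bar v$, $\bar\mu'=-G\bar\xi+T\bar v$, $\bar v'=-K\bar\xi-T\bar\mu$. $C$ is a $\bar\mu$-helix if there are a constant unit vector $\bar d_\mu$ (axis) and a constant $\eta$ with $\langle\bar\mu,\bar d_\mu\rangle=\cos\eta$ along $C$. *)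

theory Defs
  imports "HOL-Analysis.Analysis" "HOL-Analysis.Cross3"
begin

definition myller_config ::
  "real set \<Rightarrow> (real \<Rightarrow> real^3) \<Rightarrow> (real \<Rightarrow> real^3) \<Rightarrow> (real \<Rightarrow> real^3) \<Rightarrow> (real \<Rightarrow> real^3)
   \<Rightarrow> (real \<Rightarrow> real) \<Rightarrow> (real \<Rightarrow> real) \<Rightarrow> (real \<Rightarrow> real) \<Rightarrow> bool" where
  "myller_config I c xi mu v G K T \<longleftrightarrow>
     open I \<and> is_interval I \<and> I \<noteq> {} \<and>
     continuous_on I G \<and> continuous_on I K \<and> continuous_on I T \<and>
     (\<forall>s\<in>I.
        (\<exists>c'. (c has_vector_derivative c') (at s) \<and> norm c' = 1) \<and>
        norm (xi s) = 1 \<and> norm (v s) = 1 \<and> xi s \<bullet> v s = 0 \<and>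
        mu s = cross3 (v s) (xi s) \<and>
        (xi has_vector_derivative (G s *\<^sub>R mu s + K s *\<^sub>R v s)) (at s) \<and>
        (mu has_vector_derivative (- G s *\<^sub>R xi s + T s *\<^sub>R v s)) (at s) \<and>
        (v has_vector_derivative (- K s *\<^sub>R xi s - T s *\<^sub>R mu s)) (at s))"

end

theory Submission
  imports Defs
begin
lemma bac: "cross3 (x::real^3) (cross3 y z) = (x \<bullet> z) *\<^sub>R y - (x \<bullet> y) *\<^sub>R z"
  by (simp add: cross3_simps forall_3)
lemma frame:
  fixes a b d :: "real^3"
  assumes "norm a = 1" "norm b = 1" "a \<bullet> b = 0"
  shows "d = (d \<bullet> a) *\<^sub>R a + (d \<bullet> cross3 b a) *\<^sub>R cross3 b a + (d \<bullet> b) *\<^sub>R b"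
proof -
  let ?n = "cross3 b a"
  have aa: "a \<bullet> a = 1" "b \<bullet> b = 1" using assms by (simp_all add: dot_square_norm)
  have nn: "?n \<bullet> ?n = 1" using norm_cross_dot[of b a] assms by (simp add: dot_square_norm inner_commute)
  have 1: "cross3 ?n (cross3 d ?n) = d - (?n \<bullet> d) *\<^sub>R ?n" using bac[of ?n d ?n] nn by simp
  have 2: "cross3 d ?n = (d \<bullet> a) *\<^sub>R b - (d \<bullet> b) *\<^sub>R a" using bac[of d b a] by simp
  have 3: "cross3 ?n b = a" using bac[of b b a] aa assms(3) cross_skew[of ?n b] by (simp add: inner_commute)
  have 4: "cross3 ?n a = - b" using bac[of a b a] aa assms(3) cross_skew[of ?n a] by (simp add: inner_commute)
  have "cross3 ?n (cross3 d ?n) = (d \<bullet> a) *\<^sub>R a + (d \<bullet> b) *\<^sub>R b"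
    unfolding 2 by (simp add: Cross3.right_diff_distrib cross_mult_right 3 4)
  with 1 show ?thesis by (simp add: inner_commute algebra_simps)
qed

lemma deriv_inner:
  assumes "(f has_vector_derivative f') (at s)"
  shows "((\<lambda>t. f t \<bullet> (d::real^3)) has_vector_derivative (f' \<bullet> d)) (at s)"
proof -
  have "((\<lambda>t. f t \<bullet> d) has_derivative (\<lambda>x. (x *\<^sub>R f') \<bullet> d)) (at s)"
    using has_derivative_inner_left[OF assms[unfolded has_vector_derivative_def]] .
  then show ?thesis unfolding has_vector_derivative_def by (simp add: mult.commute)
qed

theorem corollary18:
  fixes I :: "real set" and c xi mu v :: "real \<Rightarrow> real^3"
    and G K T :: "real \<Rightarrow> real" and d :: "real^3" and \<eta> :: real
  assumes "myller_config I c xi mu v G K T"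
    and "\<forall>s\<in>I. (G s, T s) \<noteq> (0, 0)"
    and "norm d = 1"
    and "\<forall>s\<in>I. mu s \<bullet> d = cos \<eta>"
  shows "\<exists>\<sigma>\<in>{1, -1::real}. \<forall>s\<in>I.
           d = (- \<sigma> * sin \<eta> * T s / sqrt ((G s)\<^sup>2 + (T s)\<^sup>2)) *\<^sub>R xi s
             + cos \<eta> *\<^sub>R mu s
             + (- \<sigma> * sin \<eta> * G s / sqrt ((G s)\<^sup>2 + (T s)\<^sup>2)) *\<^sub>R v s"
proof -
  note cfg = assms(1)[unfolded myller_config_def]
  have oI: "open I" and iI: "is_interval I" and neI: "I \<noteq> {}"
    and cG: "continuous_on I G" and cT: "continuous_on I T" using cfg by auto
  define f where "f s = ((xi s \<bullet> d) * T s + (v s \<bullet> d) * G s) / sqrt ((G s)\<^sup>2 + (T s)\<^sup>2)" for s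
  have pos: "(G s)\<^sup>2 + (T s)\<^sup>2 > 0" if "s \<in> I" for s
    using assms(2) that by (auto simp: sum_power2_gt_zero_iff)
  have key: "d = (f s * T s / sqrt ((G s)\<^sup>2 + (T s)\<^sup>2)) *\<^sub>R xi s + cos \<eta> *\<^sub>R mu s
             + (f s * G s / sqrt ((G s)\<^sup>2 + (T s)\<^sup>2)) *\<^sub>R v s \<and> (f s = sin \<eta> \<or> f s = - sin \<eta>)"
    if s: "s \<in> I" for s
  proof -
    have nx: "norm (xi s) = 1" and nv: "norm (v s) = 1" and o: "xi s \<bullet> v s = 0"
      and m: "mu s = cross3 (v s) (xi s)"
      and dm: "(mu has_vector_derivative (- G s *\<^sub>R xi s + T s *\<^sub>R v s)) (at s)"
      using cfg s by auto
    define a where "a = xi s \<bullet> d"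
    define b where "b = v s \<bullet> d"
    have dmu: "d \<bullet> cross3 (v s) (xi s) = cos \<eta>" using bspec[OF assms(4) s] m by (simp add: inner_commute)
    have fr: "d = a *\<^sub>R xi s + cos \<eta> *\<^sub>R mu s + b *\<^sub>R v s"
      using frame[OF nx nv o, of d] unfolding a_def b_def dmu m
      by (simp add: inner_commute)
    have "d \<bullet> d = 1" using assms(3) by (simp add: dot_square_norm)
    also have "d \<bullet> d = a * a + cos \<eta> * cos \<eta> + b * b"
      apply (subst (2) fr) using assms(4) s
      by (simp add: inner_add_right a_def b_def inner_commute)
    finally have n1: "a\<^sup>2 + b\<^sup>2 = (sin \<eta>)\<^sup>2"
      using sin_cos_squared_add[of \<eta>] by (simp add: power2_eq_square)
    have d1: "((\<lambda>t. mu t \<bullet> d) has_vector_derivative ((- G s *\<^sub>R xi s + T s *\<^sub>R v s) \<bullet> d)) (at s)"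
      by (rule deriv_inner[OF dm])
    have d2: "((\<lambda>t. mu t \<bullet> d) has_vector_derivative 0) (at s)"
      by (rule has_vector_derivative_transform_within_open[OF _ oI s, of "\<lambda>t. cos \<eta>"])
         (use assms(4) in auto)
    have rel: "- G s * a + T s * b = 0"
      using vector_derivative_unique_at[OF d1 d2] unfolding a_def b_def
        by (simp add: inner_add_left inner_diff_left inner_scaleR_left)
    have P: "(G s)\<^sup>2 + (T s)\<^sup>2 > 0" using pos s .
    let ?r = "sqrt ((G s)\<^sup>2 + (T s)\<^sup>2)"
    have r2: "?r\<^sup>2 = (G s)\<^sup>2 + (T s)\<^sup>2" using P by simp
    have rp: "?r > 0" using P by simp
    have fs: "f s = (a * T s + b * G s) / ?r" unfolding f_def a_def b_def ..
    have "(a * T s + b * G s)\<^sup>2 = (a\<^sup>2 + b\<^sup>2) * ((G s)\<^sup>2 + (T s)\<^sup>2)"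
    proof -
      have "(a * T s + b * G s)\<^sup>2 = (a\<^sup>2 + b\<^sup>2) * ((G s)\<^sup>2 + (T s)\<^sup>2) - (a * G s - b * T s)\<^sup>2"
        by (simp add: power2_eq_square algebra_simps)
      moreover have "a * G s - b * T s = 0" using rel by (simp add: algebra_simps)
      ultimately show ?thesis by simp
    qed
    hence "(f s)\<^sup>2 = (sin \<eta>)\<^sup>2" unfolding fs using r2 rp n1
        by (simp add: power_divide) (use P in auto)
    hence fpm: "f s = sin \<eta> \<or> f s = - sin \<eta>" using power2_eq_iff by blast
    have rel': "b * T s = a * G s" using rel by (simp add: mult.commute)
    have hT: "(a * T s + b * G s) * T s = a * ((G s)\<^sup>2 + (T s)\<^sup>2)"
    proof -
      have "(a * T s + b * G s) * T s = a * T s * T s + G s * (b * T s)" by (simp add: algebra_simps)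
      also have "... = a * ((G s)\<^sup>2 + (T s)\<^sup>2)" unfolding rel' by (simp add: algebra_simps power2_eq_square)
      finally show ?thesis .
    qed
    have hG: "(a * T s + b * G s) * G s = b * ((G s)\<^sup>2 + (T s)\<^sup>2)"
    proof -
      have "(a * T s + b * G s) * G s = T s * (a * G s) + b * G s * G s" by (simp add: algebra_simps)
      also have "... = b * ((G s)\<^sup>2 + (T s)\<^sup>2)" unfolding rel'[symmetric] by (simp add: algebra_simps power2_eq_square)
      finally show ?thesis .
    qed
    have ea: "f s * T s / ?r = a"
    proof -
      have "f s * T s / ?r = (a * T s + b * G s) * T s / ?r\<^sup>2" unfolding fs
        by (simp add: power2_eq_square)
      also have "... = a" using P unfolding r2
        by (simp add: hT) (use P in auto)
      finally show ?thesis .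
    qed
    have eb: "f s * G s / ?r = b"
    proof -
      have "f s * G s / ?r = (a * T s + b * G s) * G s / ?r\<^sup>2" unfolding fs
        by (simp add: power2_eq_square)
      also have "... = b" using P unfolding r2
        by (simp add: hG) (use P in auto)
      finally show ?thesis .
    qed
    show ?thesis using fr ea eb fpm by simp
  qed
  have cxi: "continuous_on I xi" and cv: "continuous_on I v"
    using cfg by (auto intro!: continuous_at_imp_continuous_on
        dest: has_vector_derivative_continuous)
  have cf: "continuous_on I f" unfolding f_def
    using pos by (auto intro!: continuous_intros cxi cv cG cT) (metis pos less_irrefl power_zero_numeral add_0)
  have "f ` I \<subseteq> {sin \<eta>, - sin \<eta>}" using key by auto
  hence "finite (f ` I)" by (rule finite_subset) simp
  then have "f constant_on I"
    by (rule continuous_finite_range_constant[OF is_interval_connected[OF iI] cf])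
  then obtain y where y: "\<forall>s\<in>I. f s = y" unfolding constant_on_def by blast
  from neI obtain s0 where s0: "s0 \<in> I" by blast
  have yy: "y = sin \<eta> \<or> y = - sin \<eta>" using key[OF s0] y s0 by auto
  show ?thesis
  proof (cases "y = - sin \<eta>")
    case True
    show ?thesis
      by (rule bexI[of _ 1]) (use key y True in auto)
  next
    case False
    with yy have "y = sin \<eta>" by auto
    then show ?thesis
      by (intro bexI[of _ "-1"]) (use key y in auto)
  qed
qed
end
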